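(* Let ${\mathbf{X}}\in\mathbb{R}_+^{m\times n}$ and let ${\mathbf{A}}\in\mathbb{R}^{k\times m}$ satisfy ${\mathbf{A}}{\mathbf{A}}^T={\mathbf{I}}_k$. Let ${\mathbf{U}}_0\in\mathbb{R}_+^{m\times r}$, ${\mathbf{V}}_0\in\mathbb{R}_+^{n\times r}$ be a minimizer of $\|{\mathbf{X}}-{\mathbf{U}}{\mathbf{V}}^T\|_F^2$ over ${\mathbf{U}}\in\mathbb{R}_+^{m\times r},{\mathbf{V}}\in\mathbb{R}_+^{n\times r}$, and set ${\mathbf{X}}_0={\mathbf{U}}_0{\mathbf{V}}_0^T$. Let $\lambda>0$ and let $(\tilde{\mathbf{U}},\tilde{\mathbf{V}})$ be any minimizer, over ${\mathbf{U}}\in\mathbb{R}_+^{m\times r},{\mathbf{V}}\in\mathbb{R}_+^{n\times r}$, of $$\|{\mathbf{A}}({\mathbf{X}}-{\mathbf{U}}{\mathbf{V}}^T)\|_F^2+\lambda\|P_{\mathbf{A}}^\perp{\mathbf{U}}{\mathbf{V}}^T\|_F^2,$$ where $P_{\mathbf{A}}^\perp={\mathbf{I}}_m-{\mathbf{A}}^T{\mathbf{A}}$. Then $\tilde{\mathbf{X}}:=\tilde{\mathbf{U}}\tilde{\mathbf{V}}^T$ satisfies $$\frac{\|{\mathbf{X}}-\tilde{\mathbf{X}}\|_F^2}{\|{\mathbf{X}}\|_F^2}\le c_\lambda\left[\frac{\|{\mathbf{X}}-{\mathbf{X}}_0\|_F^2}{\|{\mathbf{X}}\|_F^2}+\frac{\|P_{\mathbf{A}}^\perp{\mathbf{X}}\|_F^2}{\|{\mathbf{X}}\|_F^2}\right],\qquad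 c_\lambda=\max(2/\lambda,\,6,\,2\lambda+2).$$
   Context: $\mathbb{R}_+^{a\times b}$ denotes the set of $a\times b$ matrices with all entries nonnegative; ${\mathbf{X}}\neq 0$ is implicit in the ratios. $\|\cdot\|_F$ is the Frobenius norm. *)

theory Defs
  imports "HOL-Analysis.Analysis"
begin

definition frob_sq :: "real^'n^'m \<Rightarrow> real" where
  "frob_sq M = (\<Sum>i\<in>UNIV. \<Sum>j\<in>UNIV. (M $ i $ j)^2)"

definition nonneg_mat :: "real^'n^'m \<Rightarrow> bool" where
  "nonneg_mat M \<longleftrightarrow> (\<forall>i j. M $ i $ j \<ge> 0)"

definition perp_proj :: "real^'m^'k \<Rightarrow> real^'m^'m" where
  "perp_proj A = mat 1 - transpose A ** A"

end

theory Submission imports Defs begin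

definition fip :: "real^'n^'m \<Rightarrow> real^'n^'m \<Rightarrow> real" where
  "fip M N = (\<Sum>i\<in>UNIV. \<Sum>j\<in>UNIV. M $ i $ j * N $ i $ j)"

lemma frob_fip: "frob_sq M = fip M M"
  by (simp add: frob_sq_def fip_def power2_eq_square)

lemma fip_sym: "fip M N = fip N M"
  by (simp add: fip_def mult.commute)

lemma fip_diff_l: "fip (M - N) K = fip M K - fip N K"
  by (simp add: fip_def left_diff_distrib sum_subtractf)

lemma fip_diff_r: "fip K (M - N) = fip K M - fip K N"
  by (simp add: fip_def right_diff_distrib sum_subtractf)

lemma fip_mult: "fip ((A::real^'m^'k) ** M) N = fip M (transpose A ** N)"
proof -
  have "fip (A ** M) N = (\<Sum>i\<in>UNIV. \<Sum>j\<in>UNIV. \<Sum>l\<in>UNIV. A$i$l * M$l$j * N$i$j)"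
    by (simp add: fip_def matrix_matrix_mult_def sum_distrib_right)
  also have "\<dots> = (\<Sum>l\<in>UNIV. \<Sum>j\<in>UNIV. \<Sum>i\<in>UNIV. A$i$l * M$l$j * N$i$j)"
  proof -
    have "(\<Sum>i\<in>UNIV. \<Sum>j\<in>UNIV. \<Sum>l\<in>UNIV. A$i$l * M$l$j * N$i$j)
        = (\<Sum>i\<in>UNIV. \<Sum>l\<in>UNIV. \<Sum>j\<in>UNIV. A$i$l * M$l$j * N$i$j)"
      by (rule sum.cong[OF refl], rule sum.swap)
    also have "\<dots> = (\<Sum>l\<in>UNIV. \<Sum>i\<in>UNIV. \<Sum>j\<in>UNIV. A$i$l * M$l$j * N$i$j)"
      by (rule sum.swap)
    also have "\<dots> = (\<Sum>l\<in>UNIV. \<Sum>j\<in>UNIV. \<Sum>i\<in>UNIV. A$i$l * M$l$j * N$i$j)"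
      by (rule sum.cong[OF refl], rule sum.swap)
    finally show ?thesis .
  qed
  also have "\<dots> = fip M (transpose A ** N)"
    by (simp add: fip_def matrix_matrix_mult_def sum_distrib_left transpose_def mult_ac)
  finally show ?thesis .
qed

lemma matrix_sub_rdistrib: "((M::real^'n^'m) - N) ** K = M ** K - N ** K"
  by (simp add: vec_eq_iff matrix_matrix_mult_def left_diff_distrib sum_subtractf)

lemma matrix_sub_ldistrib: "(K::real^'n^'m) ** (M - N) = K ** M - K ** N"
  by (simp add: vec_eq_iff matrix_matrix_mult_def right_diff_distrib sum_subtractf)

lemma frob_nonneg: "frob_sq M \<ge> 0"
  by (simp add: frob_sq_def sum_nonneg)

lemma frob_pos: "M \<noteq> 0 \<Longrightarrow> frob_sq M > 0"
proof -
  assume "M \<noteq> 0"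
  then obtain i j where ij: "M$i$j \<noteq> 0" by (metis vec_eq_iff zero_index)
  have "(M$i$j)^2 \<le> (\<Sum>j\<in>UNIV. (M$i$j)^2)"
    by (rule member_le_sum) auto
  also have "\<dots> \<le> frob_sq M" unfolding frob_sq_def
    by (rule member_le_sum[where f="\<lambda>i. \<Sum>j\<in>UNIV. (M$i$j)^2"]) (auto intro: sum_nonneg)
  finally have "(M$i$j)^2 \<le> frob_sq M" .
  moreover have "0 < (M$i$j)^2" using ij by simp
  ultimately show ?thesis by linarith
qed

lemma sq2: "((a::real) + b)^2 \<le> 2*a^2 + 2*b^2"
proof -
  have "0 \<le> (a-b)^2" by simp
  thus ?thesis by (simp add: power2_eq_square algebra_simps)
qed

lemma frob_add2: "frob_sq ((M::real^'n^'m) + N) \<le> 2 * frob_sq M + 2 * frob_sq N"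
proof -
  have "frob_sq (M + N) \<le> (\<Sum>i\<in>UNIV. \<Sum>j\<in>UNIV. 2*(M$i$j)^2 + 2*(N$i$j)^2)"
    unfolding frob_sq_def
    by (intro sum_mono) (simp add: sq2)
  thus ?thesis by (simp add: frob_sq_def sum.distrib sum_distrib_left)
qed

lemma pyth:
  assumes "A ** transpose A = mat 1"
  shows "frob_sq (M::real^'n^'m) = frob_sq ((A::real^'m^'k) ** M) + frob_sq (perp_proj A ** M)"
proof -
  let ?P = "transpose A ** (A ** M)"
  have Q: "perp_proj A ** M = M - ?P"
    by (simp add: perp_proj_def matrix_sub_rdistrib matrix_mul_assoc)
  have a: "fip M ?P = frob_sq (A ** M)"
    unfolding frob_fip by (rule fip_mult[symmetric])
  have b: "fip ?P ?P = frob_sq (A ** M)"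
  proof -
    have "fip ?P ?P = fip (A ** M) (A ** ?P)"
      using fip_mult[of "transpose A" "A ** M" ?P] by (simp only: transpose_transpose)
    also have "A ** ?P = A ** M" by (simp add: matrix_mul_assoc assms)
    finally show ?thesis by (simp add: frob_fip)
  qed
  have "frob_sq (perp_proj A ** M) = fip M M - fip M ?P - fip ?P M + fip ?P ?P"
    unfolding Q frob_fip fip_diff_l fip_diff_r by simp
  moreover have "fip ?P M = fip M ?P" by (rule fip_sym)
  ultimately show ?thesis using a b unfolding frob_fip by linarith
qed

lemma sq2m: "((a::real) - b)^2 \<le> 2*a^2 + 2*b^2"
proof -
  have "0 \<le> (a+b)^2" by simp
  thus ?thesis by (simp add: power2_eq_square algebra_simps)
qed

lemma frob_diff2: "frob_sq ((M::real^'n^'m) - N) \<le> 2 * frob_sq M + 2 * frob_sq N"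
proof -
  have "frob_sq (M - N) \<le> (\<Sum>i\<in>UNIV. \<Sum>j\<in>UNIV. 2*(M$i$j)^2 + 2*(N$i$j)^2)"
    unfolding frob_sq_def
    by (intro sum_mono) (simp add: sq2m)
  thus ?thesis by (simp add: frob_sq_def sum.distrib sum_distrib_left)
qed

lemma final_arith:
  fixes a q b p F D E lambda :: real
  assumes "a \<ge> 0" "q \<ge> 0" "b \<ge> 0" "p \<ge> 0" "F \<ge> 0" "lambda > 0"
    and E: "E = a + q" and D: "D \<le> b + 2*p + 2*F"
    and f: "b + lambda * p \<le> a + lambda * (2*F + 2*q)"
  shows "D \<le> max (max (2 / lambda) 6) (2 * lambda + 2) * (E + F)"
proof (cases "lambda \<ge> 2")
  case True
  have "b + 2*p \<le> b + lambda*p" using True assms by (simp add: mult_right_mono)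
  hence "D \<le> a + 2*lambda*q + (2*lambda+2)*F" using D f by (simp add: algebra_simps)
  also have "\<dots> \<le> (2*lambda+2)*(E+F)" using assms by (simp add: algebra_simps)
  also have "\<dots> \<le> max (max (2 / lambda) 6) (2 * lambda + 2) * (E + F)"
    using assms by (intro mult_right_mono) auto
  finally show ?thesis .
next
  case False
  define k where "k = 2 / lambda"
  have kl: "k * lambda = 2" using assms by (simp add: k_def)
  have k1: "k \<ge> 1" using False assms by (simp add: k_def)
  have "b + 2*p = b + k*lambda*p" using kl by simp
  also have "\<dots> \<le> k*b + k*lambda*p" using mult_right_mono[OF k1 \<open>b \<ge> 0\<close>] by simp
  also have "\<dots> = k*(b + lambda*p)" by (simp add: algebra_simps)
  also have "\<dots> \<le> k*(a + lambda * (2*F + 2*q))" using f k1 by (simp add: mult_left_mono)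
  also have "\<dots> = k*a + 2*(k*lambda)*F + 2*(k*lambda)*q" by (simp add: algebra_simps)
  also have "\<dots> = k*a + 4*F + 4*q" using kl by simp
  finally have "D \<le> k*a + 4*q + 6*F" using D by linarith
  moreover have "k*a \<le> max (max (2 / lambda) 6) (2 * lambda + 2) * a"
    using assms by (intro mult_right_mono) (auto simp: k_def)
  moreover have "4*q + 6*F \<le> max (max (2 / lambda) 6) (2 * lambda + 2) * (q + F)"
  proof -
    have "4*q + 6*F \<le> 6 * (q+F)" using assms by simp
    also have "\<dots> \<le> max (max (2 / lambda) 6) (2 * lambda + 2) * (q + F)"
      using assms by (intro mult_right_mono) auto
    finally show ?thesis .
  qed
  ultimately show ?thesis using E by (simp add: algebra_simps)
qed

theorem mainTheorem2:
  fixes X :: "real^'n^'m" and A :: "real^'m^'k"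
    and U0 :: "real^'r^'m" and V0 :: "real^'r^'n"
    and Ut :: "real^'r^'m" and Vt :: "real^'r^'n"
    and lambda :: real
  assumes X_nonneg: "nonneg_mat X"
    and X_nz: "X \<noteq> 0"
    and A_orth: "A ** transpose A = mat 1"
    and U0_nonneg: "nonneg_mat U0" and V0_nonneg: "nonneg_mat V0"
    and min0: "\<And>U V. nonneg_mat (U :: real^'r^'m) \<Longrightarrow> nonneg_mat (V :: real^'r^'n) \<Longrightarrow>
                 frob_sq (X - U0 ** transpose V0) \<le> frob_sq (X - U ** transpose V)"
    and lam_pos: "lambda > 0"
    and Ut_nonneg: "nonneg_mat Ut" and Vt_nonneg: "nonneg_mat Vt"
    and mint: "\<And>U V. nonneg_mat (U :: real^'r^'m) \<Longrightarrow> nonneg_mat (V :: real^'r^'n) \<Longrightarrow>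
                 frob_sq (A ** (X - Ut ** transpose Vt)) + lambda * frob_sq (perp_proj A ** (Ut ** transpose Vt))
                 \<le> frob_sq (A ** (X - U ** transpose V)) + lambda * frob_sq (perp_proj A ** (U ** transpose V))"
  shows "frob_sq (X - Ut ** transpose Vt) / frob_sq X
         \<le> max (max (2 / lambda) 6) (2 * lambda + 2) *
           (frob_sq (X - U0 ** transpose V0) / frob_sq X + frob_sq (perp_proj A ** X) / frob_sq X)"
proof -
  define Y where "Y = Ut ** transpose Vt"
  define X0 where "X0 = U0 ** transpose V0"
  define Q where "Q = perp_proj A"
  have S: "frob_sq X > 0" using X_nz by (rule frob_pos)
  have f: "frob_sq (A ** (X - Y)) + lambda * frob_sq (Q ** Y)
        \<le> frob_sq (A ** (X - X0)) + lambda * frob_sq (Q ** X0)"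
    using mint[OF U0_nonneg V0_nonneg] unfolding Y_def X0_def Q_def .
  have pE: "frob_sq (X - X0) = frob_sq (A ** (X - X0)) + frob_sq (Q ** (X - X0))"
    unfolding Q_def by (rule pyth[OF A_orth])
  have pD: "frob_sq (X - Y) = frob_sq (A ** (X - Y)) + frob_sq (Q ** (X - Y))"
    unfolding Q_def by (rule pyth[OF A_orth])
  have QX0: "Q ** X0 = Q ** X - Q ** (X - X0)" by (simp add: matrix_sub_ldistrib)
  have q0: "frob_sq (Q ** X0) \<le> 2 * frob_sq (Q ** X) + 2 * frob_sq (Q ** (X - X0))"
    unfolding QX0 by (rule frob_diff2)
  have qY: "frob_sq (Q ** (X - Y)) \<le> 2 * frob_sq (Q ** X) + 2 * frob_sq (Q ** Y)"
    unfolding matrix_sub_ldistrib by (rule frob_diff2)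
  have f2: "frob_sq (A ** (X - Y)) + lambda * frob_sq (Q ** Y)
        \<le> frob_sq (A ** (X - X0)) + lambda * (2 * frob_sq (Q ** X) + 2 * frob_sq (Q ** (X - X0)))"
    using f q0 lam_pos by (smt (verit) mult_left_mono)
  have main: "frob_sq (X - Y) \<le> max (max (2 / lambda) 6) (2 * lambda + 2) * (frob_sq (X - X0) + frob_sq (Q ** X))"
    by (rule final_arith[OF frob_nonneg frob_nonneg frob_nonneg frob_nonneg frob_nonneg lam_pos pE _ f2])
       (use pD qY in linarith)
  have "frob_sq (X - Y) / frob_sq X \<le> max (max (2 / lambda) 6) (2 * lambda + 2) * (frob_sq (X - X0) + frob_sq (Q ** X)) / frob_sq X"
    using main S by (simp add: divide_right_mono)
  then show ?thesis unfolding Y_def X0_def Q_def by (simp add: add_divide_distrib[symmetric] times_divide_eq_right)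
qed

end
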